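(* For every $q\geqslant 1$ and all natural numbers $m_0,\dots,m_{q-1}>1$, the following sentences are provable in the theory ${\sf TQ}$: $\forall x_0,\dots,x_{q-1}\exists y\,[\bigwedge_{j<q}\neg\Re_{m_j}(y\cdot x_j)]$; $\forall x_0,\dots,x_{q-1},u\exists y\,[u<y\wedge\bigwedge_{j<q}\neg\Re_{m_j}(y\cdot x_j)]$; $\forall x_0,\dots,x_{q-1},v\exists y\,[y<v\wedge\bigwedge_{j<q}\neg\Re_{m_j}(y\cdot x_j)]$; $\forall x_0,\dots,x_{q-1},u,v\exists y\,[u<v\rightarrow (u<y\wedge y<v\wedge\bigwedge_{j<q}\neg\Re_{m_j}(y\cdot x_j))]$.
   Context: Language $\{<,\times,\square^{-1},\mathbf{1}\}$; $y^n$ abbreviates $y\cdots y$ ($n$ times); for $n\geqslant 1$, $\Re_n(y)$ abbreviates the formula $\exists x\,(y=x^n)$. ${\sf TQ}$ is the theory axiomatized by: ($\texttt{O}_1$) $\forall x,y(x<y\rightarrow\neg(y<x))$; ($\texttt{O}_2$) $\forall x,y,z(x<y\wedge y<z\rightarrow x<z)$; ($\texttt{O}_3$) $\forall x,y(x<y\vee x=y\vee y<x)$; ($\texttt{M}_1$) $\forall x,y,z(x\cdot(y\cdot z)=(x\cdot y)\cdot z)$; ($\texttt{M}_2$) $\forall x(x\cdot\mathbf{1}=x)$; ($\texttt{M}_3$) $\forall x(x\cdot x^{-1}=\mathbf{1})$; ($\texttt{M}_4$) $\forall x,y(x\cdot y=y\cdot x)$; ($\texttt{M}_5$) $\forall x,y,z(x<y\rightarrow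 x\cdot z<y\cdot z)$; ($\texttt{M}_6$) $\exists y(y\neq\mathbf{1})$; ($\texttt{M}_{10}$) for each $n\geqslant1$: $\forall x,z\exists y(x<z\rightarrow x<y^n\wedge y^n<z)$; ($\texttt{M}_{11}$) for each $n\geqslant 1$, each $q\geqslant1$ and all natural numbers $m_0,\dots,m_{q-1}>1$: $\forall x_0,\dots,x_{q-1}\exists y\forall z\bigwedge_{j<q,\ m_j\nmid n}(y^n\cdot x_j\neq z^{m_j})$, the conjunction ranging over those $j<q$ for which $m_j$ does not divide $n$. *)

theory Defs
  imports Main
begin

text \<open>Structures for the language (<, *, inverse, 1) are given by four
  components on a carrier type 'a. Provability in TQ is rendered semantically
  (by Goedel completeness): truth in every model of TQ.\<close>

text \<open>y^n = y * ... * y (n times), for n >= 1; the value at n = 0 is the unit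
  (never used by the statement).\<close>
fun tq_pow :: "('a \<Rightarrow> 'a \<Rightarrow> 'a) \<Rightarrow> 'a \<Rightarrow> 'a \<Rightarrow> nat \<Rightarrow> 'a" where
  "tq_pow mult one y 0 = one"
| "tq_pow mult one y (Suc 0) = y"
| "tq_pow mult one y (Suc (Suc n)) = mult y (tq_pow mult one y (Suc n))"

definition tq_root :: "('a \<Rightarrow> 'a \<Rightarrow> 'a) \<Rightarrow> 'a \<Rightarrow> nat \<Rightarrow> 'a \<Rightarrow> bool" where
  "tq_root mult one n y \<longleftrightarrow> (\<exists>x. y = tq_pow mult one x n)"

definition TQ_model ::
  "('a \<Rightarrow> 'a \<Rightarrow> bool) \<Rightarrow> ('a \<Rightarrow> 'a \<Rightarrow> 'a) \<Rightarrow> ('a \<Rightarrow> 'a) \<Rightarrow> 'a \<Rightarrow> bool" where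
  "TQ_model lt mult iv one \<longleftrightarrow>
     (\<forall>x y. lt x y \<longrightarrow> \<not> lt y x) \<and>
     (\<forall>x y z. lt x y \<and> lt y z \<longrightarrow> lt x z) \<and>
     (\<forall>x y. lt x y \<or> x = y \<or> lt y x) \<and>
     (\<forall>x y z. mult x (mult y z) = mult (mult x y) z) \<and>
     (\<forall>x. mult x one = x) \<and>
     (\<forall>x. mult x (iv x) = one) \<and>
     (\<forall>x y. mult x y = mult y x) \<and>
     (\<forall>x y z. lt x y \<longrightarrow> lt (mult x z) (mult y z)) \<and>
     (\<exists>y. y \<noteq> one) \<and>
     (\<forall>n\<ge>1. \<forall>x z. \<exists>y. lt x z \<longrightarrow>
         lt x (tq_pow mult one y n) \<and> lt (tq_pow mult one y n) z) \<and>
     (\<forall>n\<ge>1. \<forall>q\<ge>1. \<forall>m::nat\<Rightarrow>nat. (\<forall>j<q. m j > 1) \<longrightarrow>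
        (\<forall>x::nat\<Rightarrow>'a. \<exists>y. \<forall>z. \<forall>j<q. \<not> (m j dvd n) \<longrightarrow>
            mult (tq_pow mult one y n) (x j) \<noteq> tq_pow mult one z (m j)))"

end

theory Submission
  imports Defs
begin

locale tqg =
  fixes mult :: "'a \<Rightarrow> 'a \<Rightarrow> 'a" and iv :: "'a \<Rightarrow> 'a" and one :: 'a
  assumes assoc: "\<And>x y z. mult x (mult y z) = mult (mult x y) z"
    and unit: "\<And>x. mult x one = x"
    and inv: "\<And>x. mult x (iv x) = one"
    and comm: "\<And>x y. mult x y = mult y x"
begin

abbreviation P where "P \<equiv> tq_pow mult one"

lemma unitl: "mult one x = x" using unit comm by metis

lemma pow_Suc: "P y (Suc n) = mult y (P y n)"
  by (cases n) (auto simp: unit)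

lemma pow_add: "P y (a + b) = mult (P y a) (P y b)"
  by (induction a) (auto simp: pow_Suc unitl assoc)

lemma pow_mult: "P y (a * b) = P (P y a) b"
  by (induction b) (auto simp: pow_Suc pow_add comm)

lemma pow_one: "P one n = one"
  by (induction n) (auto simp: pow_Suc unit)

lemma pow_distrib: "P (mult a b) n = mult (P a n) (P b n)"
proof (induction n)
  case 0 then show ?case by (simp add: unit)
next
  case (Suc n)
  then show ?case by (simp add: pow_Suc) (metis assoc comm)
qed

lemma pow_inv: "mult (P c n) (P (iv c) n) = one"
  by (metis pow_distrib inv pow_one)

lemma pow1: "P y 1 = y" by simp

lemma swap: "mult (mult a b) c = mult (mult a c) b"
  by (metis assoc comm)

end

theorem lemma4:
  fixes lt :: "'a \<Rightarrow> 'a \<Rightarrow> bool" and mult :: "'a \<Rightarrow> 'a \<Rightarrow> 'a"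
    and iv :: "'a \<Rightarrow> 'a" and one :: 'a
    and q :: nat and m :: "nat \<Rightarrow> nat"
  assumes "TQ_model lt mult iv one"
    and "q \<ge> 1"
    and "\<forall>j<q. m j > 1"
  shows "(\<forall>x::nat\<Rightarrow>'a. \<exists>y. \<forall>j<q. \<not> tq_root mult one (m j) (mult y (x j)))
       \<and> (\<forall>(x::nat\<Rightarrow>'a) u. \<exists>y. lt u y \<and> (\<forall>j<q. \<not> tq_root mult one (m j) (mult y (x j))))
       \<and> (\<forall>(x::nat\<Rightarrow>'a) v. \<exists>y. lt y v \<and> (\<forall>j<q. \<not> tq_root mult one (m j) (mult y (x j))))
       \<and> (\<forall>(x::nat\<Rightarrow>'a) u v. \<exists>y. lt u v \<longrightarrow>
            (lt u y \<and> lt y v \<and> (\<forall>j<q. \<not> tq_root mult one (m j) (mult y (x j)))))"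
proof -
  note M = assms(1)[unfolded TQ_model_def]
  have asy: "\<And>x y. lt x y \<Longrightarrow> \<not> lt y x" using M[THEN conjunct1] by blast
  have tri: "\<And>x y. lt x y \<or> x = y \<or> lt y x" using M[THEN conjunct2, THEN conjunct2, THEN conjunct1] by blast
  have mon: "\<And>x y z. lt x y \<Longrightarrow> lt (mult x z) (mult y z)" using M[THEN conjunct2, THEN conjunct2, THEN conjunct2, THEN conjunct2, THEN conjunct2, THEN conjunct2, THEN conjunct2, THEN conjunct1] by blast
  have ne: "\<exists>y. y \<noteq> one" using M[THEN conjunct2, THEN conjunct2, THEN conjunct2, THEN conjunct2, THEN conjunct2, THEN conjunct2, THEN conjunct2, THEN conjunct2, THEN conjunct1] by blast
  interpret tqg mult iv one
    using M[THEN conjunct2, THEN conjunct2, THEN conjunct2, THEN conjunct1] M[THEN conjunct2, THEN conjunct2, THEN conjunct2, THEN conjunct2, THEN conjunct1] M[THEN conjunct2, THEN conjunct2, THEN conjunct2, THEN conjunct2, THEN conjunct2, THEN conjunct1] M[THEN conjunct2, THEN conjunct2, THEN conjunct2, THEN conjunct2, THEN conjunct2, THEN conjunct2, THEN conjunct1] by unfold_locales blast+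
  have M10: "\<And>n x z. n \<ge> 1 \<Longrightarrow> lt x z \<Longrightarrow> \<exists>y. lt x (P y n) \<and> lt (P y n) z"
    using M[THEN conjunct2, THEN conjunct2, THEN conjunct2, THEN conjunct2, THEN conjunct2, THEN conjunct2, THEN conjunct2, THEN conjunct2, THEN conjunct2, THEN conjunct1] by blast
  have M11r: "\<forall>n\<ge>1. \<forall>q\<ge>1. \<forall>m::nat\<Rightarrow>nat. (\<forall>j<q. m j > 1) \<longrightarrow>
        (\<forall>x::nat\<Rightarrow>'a. \<exists>y. \<forall>z. \<forall>j<q. \<not> (m j dvd n) \<longrightarrow>
            mult (P y n) (x j) \<noteq> P z (m j))"
    using M[THEN conjunct2, THEN conjunct2, THEN conjunct2, THEN conjunct2, THEN conjunct2, THEN conjunct2, THEN conjunct2, THEN conjunct2, THEN conjunct2, THEN conjunct2] .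
  have M11: "\<forall>x::nat\<Rightarrow>'a. \<exists>y. \<forall>z. \<forall>j<q. \<not> (m j dvd 1) \<longrightarrow>
            mult (P y 1) (x j) \<noteq> P z (m j)"
  proof -
    have h1: "\<forall>q\<ge>1. \<forall>m::nat\<Rightarrow>nat. (\<forall>j<q. m j > 1) \<longrightarrow>
        (\<forall>x::nat\<Rightarrow>'a. \<exists>y. \<forall>z. \<forall>j<q. \<not> (m j dvd 1) \<longrightarrow>
            mult (P y 1) (x j) \<noteq> P z (m j))"
      using mp[OF spec[OF M11r, of 1] le_refl] .
    have h2: "\<forall>m::nat\<Rightarrow>nat. (\<forall>j<q. m j > 1) \<longrightarrow>
        (\<forall>x::nat\<Rightarrow>'a. \<exists>y. \<forall>z. \<forall>j<q. \<not> (m j dvd 1) \<longrightarrow>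
            mult (P y 1) (x j) \<noteq> P z (m j))"
      using mp[OF spec[OF h1, of q] assms(2)] .
    show ?thesis using mp[OF spec[OF h2, of m] assms(3)] .
  qed
  have A: "\<exists>y. \<forall>j<q. \<not> tq_root mult one (m j) (mult y (x j))" for x
  proof -
    obtain y where y: "\<forall>z. \<forall>j<q. \<not> (m j dvd 1) \<longrightarrow> mult (P y 1) (x j) \<noteq> P z (m j)"
      using M11 by blast
    have "\<forall>j<q. \<not> (m j dvd 1)" using assms(3) by auto
    then show ?thesis using y unfolding tq_root_def pow1 by metis
  qed
  have D: "\<exists>y. lt u y \<and> lt y v \<and> (\<forall>j<q. \<not> tq_root mult one (m j) (mult y (x j)))"
    if uv: "lt u v" for x u v
  proof -
    obtain y0 where y0: "\<forall>j<q. \<not> tq_root mult one (m j) (mult y0 (x j))" using A by blast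
    define N where "N = (\<Prod>j<q. m j)"
    have N1: "N \<ge> 1" unfolding N_def using assms(3)
      by (intro prod_ge_1) auto
    have dv: "m j dvd N" if "j < q" for j unfolding N_def using that by (simp add: dvd_prodI)
    obtain w where w: "lt (mult u (iv y0)) (P w N)" "lt (P w N) (mult v (iv y0))"
      using M10[OF N1 mon[OF uv]] by blast
    have canc: "mult (mult a (iv y0)) y0 = a" for a by (metis assoc comm inv unit)
    define y where "y = mult y0 (P w N)"
    have "lt u y" using mon[OF w(1), of y0] canc unfolding y_def by (metis comm)
    moreover have "lt y v" using mon[OF w(2), of y0] canc unfolding y_def by (metis comm)
    moreover have "\<not> tq_root mult one (m j) (mult y (x j))" if j: "j < q" for j
    proof
      assume "tq_root mult one (m j) (mult y (x j))"
      then obtain z where z: "mult y (x j) = P z (m j)" unfolding tq_root_def by blast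
      obtain k where k: "N = k * m j" using dv[OF j] by (metis dvd_def mult.commute)
      define c where "c = P w k"
      have yc: "y = mult y0 (P c (m j))" unfolding y_def c_def k pow_mult ..
      have "mult y0 (x j) = mult (mult y0 (x j)) (mult (P c (m j)) (P (iv c) (m j)))"
        by (simp add: pow_inv unit)
      also have "\<dots> = mult (mult y (x j)) (P (iv c) (m j))" by (simp only: yc swap[of y0 "P c (m j)" "x j"] assoc)
      also have "\<dots> = P (mult z (iv c)) (m j)" using z by (simp add: pow_distrib)
      finally show False using y0 j unfolding tq_root_def by blast
    qed
    ultimately show ?thesis by blast
  qed
  obtain g where g: "lt one g" "lt (iv g) one"
  proof -
    obtain a where a: "a \<noteq> one" using ne by blast
    have i1: "lt (iv b) one" if "lt one b" for b
      using mon[OF that, of "iv b"] by (simp add: inv unitl)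
    have i2: "lt one (iv b)" if "lt b one" for b
      using mon[OF that, of "iv b"] by (simp add: inv unitl)
    have ii: "iv (iv b) = b" for b by (metis assoc comm inv unit)
    show ?thesis
    proof (cases "lt one a")
      case True then show ?thesis using that i1 by blast
    next
      case False then have "lt a one" using tri a by blast
      then show ?thesis using that[of "iv a"] i2 ii by metis
    qed
  qed
  have up: "lt u (mult u g)" for u using mon[OF g(1), of u] by (simp add: unitl comm)
  have down: "lt (mult v (iv g)) v" for v using mon[OF g(2), of v] by (simp add: unitl comm)
  show ?thesis
    using A D up down by meson
qed

end
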